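(* In the publishing problem, assume the delay cost is global with aggregated delay cost $F^{(d)}$ being $\frac{\sigma}{2}$-sub-additive, and the publishing cost is constant, $C^{(p)}_t(N)=\beta\,\mathbb{1}[N\neq\emptyset]$ (no assumption is made on the price dynamics $R$). Let $\pi$ be the policy $$\pi(t,Q_t,P_t)=\begin{cases}Q_t & \text{if }\gamma^{|Q_t|-1}\beta P_t\le F^{(d)}(|Q_t|+1),\\ \emptyset&\text{otherwise.}\end{cases}$$ Then $C(\pi)\le\sigma\,C(\pi^* )$, where $\pi^*$ is an optimal policy.
   Context: The publishing problem is the following infinite-horizon MDP in discrete time $t=0,1,2,\dots$. At each step $t$ a new transaction $H_t$ is created. The state at time $t$ is $(t,P_t,Q_t)$ with gas price $P_t\ge0$ and set $Q_t$ of unpublished transactions ($Q_0=\emptyset$). A policy $\pi$ chooses $N^\pi_t\subseteq Q_t$ to publish, incurring cost $C_t=P_t\,C^{(p)}_t(N^\pi_t)+C^{(d)}_t(Q_t\setminus N^\pi_t)$; then $Q_{t+1}=(Q_t\setminus N^\pi_t)\cup\{H_t\}$ and $P_{t+1}=R(P_t)$ for a random function $R$. Publishing cost: $C^{(p)}_t(N)=\alpha|N|+\beta\,\mathbb{1}[N\ne\emptyset]$, $\alpha,\beta\ge0$ (here $\alpha=0$). Delay cost: $C^{(d)}_t(N)=\sum_{H_\tau\in N}C^{(d)}_{H_\tau}(t-\tau)$ with non-negative functions $C^{(d)}_{H_\tau}$; it is global if all equal one function $C^{(d)}$. The expected total cost is $C(\pi)=\mathbb{E}[\sum_t\gamma^tC_t]$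 with $0<\gamma<1$; a policy is optimal if it minimizes $C(\pi)$. The aggregated delay cost is $F^{(d)}(n)=\sum_{t=1}^{n-1}\sum_{i=1}^{t}\gamma^{t-1}C^{(d)}(i)$. $F^{(d)}$ is $\sigma'$-sub-additive if for all $n_1,n_2\ge1$: $F^{(d)}(n_1+n_2)\le\sigma'\left(F^{(d)}(n_1+1)+\gamma^{n_1}F^{(d)}(n_2)\right)$. *)

theory Defs
  imports "HOL-Probability.Probability"
begin

text \<open>Transaction H_tau is identified with its creation time tau.\<close>

type_synonym policy = "nat \<Rightarrow> real \<Rightarrow> nat set \<Rightarrow> nat set"

definition valid_policy :: "policy \<Rightarrow> bool" where
  "valid_policy pol \<longleftrightarrow> (\<forall>t p Q. pol t p Q \<subseteq> Q)"

fun price :: "real \<Rightarrow> (nat \<Rightarrow> 'w \<Rightarrow> real \<Rightarrow> real) \<Rightarrow> 'w \<Rightarrow> nat \<Rightarrow> real" where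
  "price P0 R w 0 = P0"
| "price P0 R w (Suc t) = R t w (price P0 R w t)"

fun queue :: "policy \<Rightarrow> (nat \<Rightarrow> real) \<Rightarrow> nat \<Rightarrow> nat set" where
  "queue pol ps 0 = {}"
| "queue pol ps (Suc t) =
     (queue pol ps t - pol t (ps t) (queue pol ps t)) \<union> {t}"

definition pub_cost :: "real \<Rightarrow> nat set \<Rightarrow> real" where
  "pub_cost \<beta> N = (if N \<noteq> {} then \<beta> else 0)"

definition delay_cost :: "(nat \<Rightarrow> real) \<Rightarrow> nat \<Rightarrow> nat set \<Rightarrow> real" where
  "delay_cost Cd t N = (\<Sum>\<tau>\<in>N. Cd (t - \<tau>))"

definition stage_cost :: "real \<Rightarrow> (nat \<Rightarrow> real) \<Rightarrow> policy \<Rightarrow> (nat \<Rightarrow> real) \<Rightarrow> nat \<Rightarrow> real" where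
  "stage_cost \<beta> Cd pol ps t =
     (let Q = queue pol ps t; N = pol t (ps t) Q
      in ps t * pub_cost \<beta> N + delay_cost Cd t (Q - N))"

definition total_cost ::
  "'w measure \<Rightarrow> real \<Rightarrow> (nat \<Rightarrow> 'w \<Rightarrow> real \<Rightarrow> real) \<Rightarrow> real \<Rightarrow> real \<Rightarrow> (nat \<Rightarrow> real)
     \<Rightarrow> policy \<Rightarrow> ennreal" where
  "total_cost M P0 R \<beta> \<gamma> Cd pol =
     (\<integral>\<^sup>+ w. (\<Sum>t. ennreal (\<gamma> ^ t * stage_cost \<beta> Cd pol (price P0 R w) t)) \<partial>M)"

definition optimal_policy ::
  "'w measure \<Rightarrow> real \<Rightarrow> (nat \<Rightarrow> 'w \<Rightarrow> real \<Rightarrow> real) \<Rightarrow> real \<Rightarrow> real \<Rightarrow> (nat \<Rightarrow> real)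
     \<Rightarrow> policy \<Rightarrow> bool" where
  "optimal_policy M P0 R \<beta> \<gamma> Cd pol \<longleftrightarrow> valid_policy pol \<and>
     (\<forall>pol'. valid_policy pol' \<longrightarrow> total_cost M P0 R \<beta> \<gamma> Cd pol \<le> total_cost M P0 R \<beta> \<gamma> Cd pol')"

definition agg_delay :: "real \<Rightarrow> (nat \<Rightarrow> real) \<Rightarrow> nat \<Rightarrow> real" where
  "agg_delay \<gamma> Cd n = (\<Sum>t = 1..<n. \<Sum>i = 1..t. \<gamma> ^ (t - 1) * Cd i)"

definition sub_additive :: "real \<Rightarrow> real \<Rightarrow> (nat \<Rightarrow> real) \<Rightarrow> bool" where
  "sub_additive \<sigma>' \<gamma> F \<longleftrightarrow> (\<forall>n1 n2. n1 \<ge> 1 \<longrightarrow> n2 \<ge> 1 \<longrightarrow>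
     F (n1 + n2) \<le> \<sigma>' * (F (n1 + 1) + \<gamma> ^ n1 * F n2))"

definition threshold_policy :: "real \<Rightarrow> real \<Rightarrow> (nat \<Rightarrow> real) \<Rightarrow> policy" where
  "threshold_policy \<beta> \<gamma> Cd t p Q =
     (if \<gamma> ^ (card Q - 1) * \<beta> * p \<le> agg_delay \<gamma> Cd (card Q + 1) then Q else {})"

end

theory Submission
  imports Defs
begin

definition Dsum :: "(nat \<Rightarrow> real) \<Rightarrow> nat \<Rightarrow> real" where
  "Dsum Cd n = (\<Sum>i=1..n. Cd i)"

fun lr :: "real \<Rightarrow> real \<Rightarrow> (nat \<Rightarrow> real) \<Rightarrow> (nat \<Rightarrow> real) \<Rightarrow> nat \<Rightarrow> nat" where
  "lr \<beta> \<gamma> Cd ps 0 = 0"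
| "lr \<beta> \<gamma> Cd ps (Suc t) =
    (if \<gamma> ^ (t - lr \<beta> \<gamma> Cd ps t - 1) * \<beta> * ps t \<le> agg_delay \<gamma> Cd (t - lr \<beta> \<gamma> Cd ps t + 1)
     then t else lr \<beta> \<gamma> Cd ps t)"

lemma F_0[simp]: "agg_delay \<gamma> Cd 0 = 0" and F_1[simp]: "agg_delay \<gamma> Cd (Suc 0) = 0"
  unfolding agg_delay_def by auto

lemma F_Suc: "1 \<le> n \<Longrightarrow> agg_delay \<gamma> Cd (Suc n) = agg_delay \<gamma> Cd n + \<gamma>^(n-1) * Dsum Cd n"
  unfolding agg_delay_def Dsum_def by (simp add: sum.atLeastLessThan_Suc sum_distrib_left)

lemma lr_le: "lr \<beta> \<gamma> Cd ps t \<le> t"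
  by (induction t) auto

lemma lr_Suc_lt: "lr \<beta> \<gamma> Cd ps (Suc t) \<le> t"
  using lr_le[of \<beta> \<gamma> Cd ps t] by auto

lemma queue_thr: "queue (threshold_policy \<beta> \<gamma> Cd) ps t = {lr \<beta> \<gamma> Cd ps t..<t}"
proof (induction t)
  case 0 then show ?case by simp
next
  case (Suc t)
  define L where "L = lr \<beta> \<gamma> Cd ps t"
  have le: "L \<le> t" unfolding L_def by (rule lr_le)
  have c: "card {L..<t} = t - L" by simp
  have q: "queue (threshold_policy \<beta> \<gamma> Cd) ps t = {L..<t}" using Suc unfolding L_def .
  show ?case
  proof (cases "\<gamma> ^ (t - L - 1) * \<beta> * ps t \<le> agg_delay \<gamma> Cd (t - L + 1)")
    case True
    have l: "lr \<beta> \<gamma> Cd ps (Suc t) = t" using True unfolding L_def by simp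
    have th: "threshold_policy \<beta> \<gamma> Cd t (ps t) {L..<t} = {L..<t}"
      unfolding threshold_policy_def c using True by simp
    show ?thesis unfolding l queue.simps q th by auto
  next
    case False
    have l: "lr \<beta> \<gamma> Cd ps (Suc t) = L" using False unfolding L_def by simp
    have th: "threshold_policy \<beta> \<gamma> Cd t (ps t) {L..<t} = {}"
      unfolding threshold_policy_def c using False by simp
    show ?thesis unfolding l queue.simps q th using le by (simp add: atLeastLessThanSuc)
  qed
qed

lemma delay_reindex:
  assumes "L \<le> t"
  shows "(\<Sum>\<tau>\<in>{L..<t}. Cd (t - \<tau>)) = Dsum Cd (t - L)"
  unfolding Dsum_def
proof (rule sum.reindex_bij_witness[of _ "\<lambda>i. t - i" "\<lambda>\<tau>. t - \<tau>"])
qed (use assms in auto)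



lemma queue_sub: "queue pol ps t \<subseteq> {..<t}"
  by (induction t) auto

lemma finite_queue[simp]: "finite (queue pol ps t)"
  by (rule finite_subset[OF queue_sub]) simp

lemma queue_sup:
  assumes "\<And>t'. k < t' \<Longrightarrow> t' < t \<Longrightarrow> pol t' (ps t') (queue pol ps t') = {}"
  shows "{k..<t} \<subseteq> queue pol ps t"
  using assms
proof (induction t)
  case 0 then show ?case by simp
next
  case (Suc t)
  have IH: "{k..<t} \<subseteq> queue pol ps t" using Suc by auto
  show ?case
  proof (cases "k < t")
    case True
    then have "pol t (ps t) (queue pol ps t) = {}" using Suc.prems by auto
    then show ?thesis using IH by (auto simp: subset_iff less_Suc_eq)
  next
    case False
    then show ?thesis by auto
  qed
qed

lemma window_sum:
  "(\<Sum>t\<in>{Suc k..<M}. \<gamma>^t * Dsum Cd (t - k)) = \<gamma>^(Suc k) * agg_delay \<gamma> Cd (M - k)"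
proof (induction M)
  case 0 then show ?case by simp
next
  case (Suc M)
  show ?case
  proof (cases "Suc k \<le> M")
    case True
    have "(\<Sum>t\<in>{Suc k..<Suc M}. \<gamma>^t * Dsum Cd (t - k)) =
          (\<Sum>t\<in>{Suc k..<M}. \<gamma>^t * Dsum Cd (t - k)) + \<gamma>^M * Dsum Cd (M - k)"
      using True by (simp add: sum.atLeastLessThan_Suc)
    also have "\<dots> = \<gamma>^(Suc k) * agg_delay \<gamma> Cd (M - k) + \<gamma>^M * Dsum Cd (M - k)"
      using Suc by simp
    also have "\<gamma>^M = \<gamma>^(Suc k) * \<gamma>^(M - k - 1)"
    proof -
      have "Suc k + (M - k - 1) = M" using True by simp
      then show ?thesis by (metis power_add)
    qed
    also have "\<gamma>^(Suc k) * agg_delay \<gamma> Cd (M - k) + \<gamma>^(Suc k) * \<gamma>^(M - k - 1) * Dsum Cd (M - k)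
        = \<gamma>^(Suc k) * agg_delay \<gamma> Cd (Suc (M - k))"
      using True by (simp add: F_Suc distrib_left mult.assoc)
    finally show ?thesis using True by (simp add: Suc_diff_le)
  next
    case False
    then have "Suc M - k \<le> 1" by auto
    then have "Suc M - k = 0 \<or> Suc M - k = 1" by auto
    then show ?thesis using False by auto
  qed
qed

context
  fixes \<beta> \<gamma> :: real and Cd :: "nat \<Rightarrow> real" and ps :: "nat \<Rightarrow> real"
  assumes \<beta>0: "\<beta> \<ge> 0" and \<gamma>0: "0 < \<gamma>" and Cd0: "\<And>i. Cd i \<ge> 0" and ps0: "\<And>t. ps t \<ge> 0"
begin

lemma Dsum_nonneg: "Dsum Cd n \<ge> 0"
  unfolding Dsum_def by (rule sum_nonneg) (use Cd0 in auto)

lemma F_nonneg: "agg_delay \<gamma> Cd n \<ge> 0"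
  unfolding agg_delay_def using \<gamma>0 Cd0
  by (intro sum_nonneg mult_nonneg_nonneg) auto

lemma F_mono_Suc: "agg_delay \<gamma> Cd n \<le> agg_delay \<gamma> Cd (Suc n)"
proof (cases "n = 0")
  case False
  then show ?thesis using F_Suc[of n \<gamma> Cd] Dsum_nonneg \<gamma>0 by simp
qed simp

lemma stage_nonneg: "stage_cost \<beta> Cd pol ps t \<ge> 0"
  unfolding stage_cost_def Let_def pub_cost_def delay_cost_def
  using ps0[of t] \<beta>0 Cd0 by (auto intro!: add_nonneg_nonneg sum_nonneg)

lemma stage_pub_lb:
  assumes "pol t (ps t) (queue pol ps t) \<noteq> {}"
  shows "stage_cost \<beta> Cd pol ps t \<ge> ps t * \<beta>"
  unfolding stage_cost_def Let_def pub_cost_def delay_cost_def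
  using assms Cd0 by (auto intro!: sum_nonneg)

lemma stage_delay_lb:
  assumes "pol t (ps t) (queue pol ps t) = {}" and "{k..<t} \<subseteq> queue pol ps t" and "k \<le> t"
  shows "stage_cost \<beta> Cd pol ps t \<ge> Dsum Cd (t - k)"
proof -
  have "Dsum Cd (t - k) = (\<Sum>\<tau>\<in>{k..<t}. Cd (t - \<tau>))"
    using delay_reindex[OF assms(3)] by simp
  also have "\<dots> \<le> (\<Sum>\<tau>\<in>queue pol ps t. Cd (t - \<tau>))"
    using assms(2) Cd0 by (intro sum_mono2) auto
  finally show ?thesis
    unfolding stage_cost_def Let_def pub_cost_def delay_cost_def using assms(1) by simp
qed

lemma G_lemma:
  assumes "\<And>t. k < t \<Longrightarrow> t < M \<Longrightarrow> pol t (ps t) (queue pol ps t) = {}"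
  shows "(\<Sum>t\<in>{Suc k..<M}. \<gamma>^t * stage_cost \<beta> Cd pol ps t) \<ge> \<gamma>^(Suc k) * agg_delay \<gamma> Cd (M - k)"
proof -
  have "(\<Sum>t\<in>{Suc k..<M}. \<gamma>^t * Dsum Cd (t - k)) \<le> (\<Sum>t\<in>{Suc k..<M}. \<gamma>^t * stage_cost \<beta> Cd pol ps t)"
  proof (rule sum_mono)
    fix t assume t: "t \<in> {Suc k..<M}"
    have "{k..<t} \<subseteq> queue pol ps t"
      by (rule queue_sup) (use assms t in auto)
    then have "Dsum Cd (t - k) \<le> stage_cost \<beta> Cd pol ps t"
      using t assms by (intro stage_delay_lb) auto
    then show "\<gamma>^t * Dsum Cd (t - k) \<le> \<gamma>^t * stage_cost \<beta> Cd pol ps t"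
      using \<gamma>0 by (intro mult_left_mono) auto
  qed
  then show ?thesis using window_sum by metis
qed

lemma OPT_lemma:
  assumes "s < M"
  shows "(\<Sum>t\<in>{Suc s..<M}. \<gamma>^t * stage_cost \<beta> Cd pol ps t) \<ge> \<gamma>^(Suc s) * agg_delay \<gamma> Cd (M - s)
    \<or> (\<exists>j. s < j \<and> j < M \<and> pol j (ps j) (queue pol ps j) \<noteq> {} \<and>
         (\<Sum>t\<in>{Suc s..<M}. \<gamma>^t * stage_cost \<beta> Cd pol ps t) \<ge> \<gamma>^j * (ps j * \<beta>) + \<gamma>^(Suc j) * agg_delay \<gamma> Cd (M - j))"
proof (cases "\<exists>j. s < j \<and> j < M \<and> pol j (ps j) (queue pol ps j) \<noteq> {}")
  case False
  then show ?thesis using G_lemma[of s M pol] by blast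
next
  case True
  define J where "J = {j. s < j \<and> j < M \<and> pol j (ps j) (queue pol ps j) \<noteq> {}}"
  have fin: "finite J" unfolding J_def by (rule finite_subset[of _ "{..<M}"]) auto
  have ne: "J \<noteq> {}" using True unfolding J_def by auto
  define j where "j = Max J"
  have jJ: "j \<in> J" using Max_in[OF fin ne] j_def by simp
  have jmax: "\<And>t. j < t \<Longrightarrow> t < M \<Longrightarrow> pol t (ps t) (queue pol ps t) = {}"
  proof (rule ccontr)
    fix t assume "j < t" "t < M" "pol t (ps t) (queue pol ps t) \<noteq> {}"
    then have "t \<in> J" using jJ unfolding J_def by auto
    then have "t \<le> j" using Max_ge[OF fin] j_def by simp
    with \<open>j < t\<close> show False by simp
  qed
  have js: "s < j" "j < M" "pol j (ps j) (queue pol ps j) \<noteq> {}" using jJ unfolding J_def by auto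
  let ?b = "\<lambda>t. \<gamma>^t * stage_cost \<beta> Cd pol ps t"
  have bnn: "\<And>t. ?b t \<ge> 0" using \<gamma>0 stage_nonneg by simp
  have "(\<Sum>t\<in>{Suc s..<M}. ?b t) \<ge> (\<Sum>t\<in>{j..<M}. ?b t)"
    using js bnn by (intro sum_mono2) auto
  moreover have "(\<Sum>t\<in>{j..<M}. ?b t) = ?b j + (\<Sum>t\<in>{Suc j..<M}. ?b t)"
    using js by (simp add: sum.atLeast_Suc_lessThan)
  moreover have "?b j \<ge> \<gamma>^j * (ps j * \<beta>)"
    using stage_pub_lb[of pol j, OF js(3)] \<gamma>0 by (intro mult_left_mono) auto
  moreover have "(\<Sum>t\<in>{Suc j..<M}. ?b t) \<ge> \<gamma>^(Suc j) * agg_delay \<gamma> Cd (M - j)"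
    using G_lemma[of j M pol] jmax by blast
  ultimately show ?thesis using js by (intro disjI2 exI[of _ j]) auto
qed

end


lemma split_sum: "(m::nat) \<le> n \<Longrightarrow> (\<Sum>t<n. f t) = (\<Sum>t<m. f t) + (\<Sum>t\<in>{m..<n}. (f t :: real))"
proof -
  assume "m \<le> n"
  then have "{..<n} = {..<m} \<union> {m..<n}" using ivl_disj_un_one(2)[of m n] by simp
  moreover have "sum f ({..<m} \<union> {m..<n}) = sum f {..<m} + sum f {m..<n}"
    by (rule sum.union_disjoint) auto
  ultimately show ?thesis by simp
qed

lemma thr_stage:
  "stage_cost \<beta> Cd (threshold_policy \<beta> \<gamma> Cd) ps t =
    (if \<gamma> ^ (t - lr \<beta> \<gamma> Cd ps t - 1) * \<beta> * ps t \<le> agg_delay \<gamma> Cd (t - lr \<beta> \<gamma> Cd ps t + 1)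
     then ps t * (if lr \<beta> \<gamma> Cd ps t < t then \<beta> else 0) else Dsum Cd (t - lr \<beta> \<gamma> Cd ps t))"
  using lr_le[of \<beta> \<gamma> Cd ps t]
  unfolding stage_cost_def Let_def queue_thr
  by (auto simp: threshold_policy_def pub_cost_def delay_cost_def delay_reindex)

context
  fixes \<beta> \<gamma> \<sigma> :: real and Cd :: "nat \<Rightarrow> real" and ps :: "nat \<Rightarrow> real" and pol :: policy
  assumes \<beta>0: "\<beta> \<ge> 0" and \<gamma>0: "0 < \<gamma>" and Cd0: "\<And>i. Cd i \<ge> 0" and ps0: "\<And>t. ps t \<ge> 0"
    and sub: "sub_additive (\<sigma> / 2) \<gamma> (agg_delay \<gamma> Cd)" and \<sigma>2: "\<sigma> \<ge> 2"
begin

abbreviation "F \<equiv> agg_delay \<gamma> Cd"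
abbreviation "L \<equiv> lr \<beta> \<gamma> Cd ps"
abbreviation "a t \<equiv> \<gamma>^t * stage_cost \<beta> Cd (threshold_policy \<beta> \<gamma> Cd) ps t"
abbreviation "b t \<equiv> \<gamma>^t * stage_cost \<beta> Cd pol ps t"

lemma b_nonneg: "b t \<ge> 0"
  using stage_nonneg[where \<beta>=\<beta> and \<gamma>=\<gamma> and Cd=Cd and ps=ps, OF \<beta>0 \<gamma>0 Cd0 ps0] \<gamma>0 by simp

lemma sum_b_nonneg: "(\<Sum>t\<in>A. b t) \<ge> 0"
  using b_nonneg by (simp add: sum_nonneg)

lemma pow_split: "s < j \<Longrightarrow> \<gamma>^(Suc s) * \<gamma>^(j - s - 1) = \<gamma>^j"
proof -
  assume "s < j"
  then have "Suc s + (j - s - 1) = j" by simp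
  then show ?thesis by (metis power_add)
qed

lemma pow_split2: "s < j \<Longrightarrow> \<gamma>^(Suc s) * \<gamma>^(j - s) = \<gamma>^(Suc j)"
proof -
  assume "s < j"
  then have "Suc s + (j - s) = Suc j" by simp
  then show ?thesis by (metis power_add)
qed

lemma nonpub:
  assumes "s < j" "L j = s" "L (Suc j) = s"
  shows "\<gamma>^(Suc s) * F (j - s + 1) \<le> \<gamma>^j * (ps j * \<beta>)"
    and "a j = \<gamma>^j * Dsum Cd (j - s)"
proof -
  have nc: "\<not> \<gamma> ^ (j - s - 1) * \<beta> * ps j \<le> F (j - s + 1)"
    using assms by (auto split: if_splits)
  then have "F (j - s + 1) \<le> \<gamma> ^ (j - s - 1) * \<beta> * ps j" by simp
  then have "\<gamma>^(Suc s) * F (j - s + 1) \<le> \<gamma>^(Suc s) * (\<gamma> ^ (j - s - 1) * \<beta> * ps j)"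
    using \<gamma>0 by (intro mult_left_mono) auto
  also have "\<dots> = \<gamma>^j * (ps j * \<beta>)"
    using pow_split[OF assms(1)] by (simp add: algebra_simps)
  finally show "\<gamma>^(Suc s) * F (j - s + 1) \<le> \<gamma>^j * (ps j * \<beta>)" .
  show "a j = \<gamma>^j * Dsum Cd (j - s)"
    using nc assms by (simp add: thr_stage)
qed

lemma sub_inst:
  assumes "1 \<le> n1" "1 \<le> n2"
  shows "F (n1 + n2) \<le> \<sigma> / 2 * (F (n1 + 1) + \<gamma>^n1 * F n2)"
  using sub assms unfolding sub_additive_def by blast

lemma lemmaA:
  assumes sN: "s < N" and Ls: "\<And>t. s < t \<Longrightarrow> t \<le> N \<Longrightarrow> L t = s"
  shows "(\<Sum>t\<in>{Suc s..<N}. a t) = \<gamma>^(Suc s) * F (N - s)"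
    and "(\<Sum>t\<in>{Suc s..<N}. a t) \<le> \<sigma> * (\<Sum>t\<in>{Suc s..<N}. b t)"
proof -
  have "(\<Sum>t\<in>{Suc s..<N}. a t) = (\<Sum>t\<in>{Suc s..<N}. \<gamma>^t * Dsum Cd (t - s))"
  proof (rule sum.cong)
    fix x assume x: "x \<in> {Suc s..<N}"
    then show "a x = \<gamma>^x * Dsum Cd (x - s)"
    proof -
      have x1: "s < x" "x \<le> N" using x by auto
      have x2: "s < Suc x" "Suc x \<le> N" using x by auto
      show ?thesis by (rule nonpub(2)[OF x1(1) Ls[OF x1] Ls[OF x2]])
    qed
  qed simp
  also have "\<dots> = \<gamma>^(Suc s) * F (N - s)" by (rule window_sum)
  finally show eqA: "(\<Sum>t\<in>{Suc s..<N}. a t) = \<gamma>^(Suc s) * F (N - s)" .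
  let ?B = "\<Sum>t\<in>{Suc s..<N}. b t"
  have B0: "?B \<ge> 0" by (rule sum_b_nonneg)
  from OPT_lemma[where \<beta>=\<beta> and \<gamma>=\<gamma> and Cd=Cd and ps=ps and pol=pol, OF \<beta>0 \<gamma>0 Cd0 ps0 sN]
  show "(\<Sum>t\<in>{Suc s..<N}. a t) \<le> \<sigma> * ?B"
  proof
    assume "\<gamma>^(Suc s) * F (N - s) \<le> ?B"
    moreover have "?B \<le> \<sigma> * ?B" using B0 \<sigma>2 mult_right_mono[of 1 \<sigma> ?B] by simp
    ultimately show ?thesis using eqA by simp
  next
    assume "\<exists>j>s. j < N \<and> pol j (ps j) (queue pol ps j) \<noteq> {} \<and>
         \<gamma>^j * (ps j * \<beta>) + \<gamma>^(Suc j) * F (N - j) \<le> ?B"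
    then obtain j where j: "s < j" "j < N" "\<gamma>^j * (ps j * \<beta>) + \<gamma>^(Suc j) * F (N - j) \<le> ?B"
      by blast
    have np: "\<gamma>^(Suc s) * F (j - s + 1) \<le> \<gamma>^j * (ps j * \<beta>)"
    proof -
      have x1: "s < j" "j \<le> N" using j by auto
      have x2: "s < Suc j" "Suc j \<le> N" using j by auto
      show ?thesis by (rule nonpub(1)[OF x1(1) Ls[OF x1] Ls[OF x2]])
    qed
    have sa: "F ((j - s) + (N - j)) \<le> \<sigma> / 2 * (F ((j - s) + 1) + \<gamma>^(j - s) * F (N - j))"
      using j by (intro sub_inst) auto
    have eq: "(j - s) + (N - j) = N - s" using j by simp
    have "\<gamma>^(Suc s) * F (N - s) \<le> \<gamma>^(Suc s) * (\<sigma> / 2 * (F ((j - s) + 1) + \<gamma>^(j - s) * F (N - j)))"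
      using sa eq \<gamma>0 by (intro mult_left_mono) auto
    also have "\<dots> = \<sigma> / 2 * (\<gamma>^(Suc s) * F (j - s + 1) + \<gamma>^(Suc s) * \<gamma>^(j - s) * F (N - j))"
      by (simp add: algebra_simps)
    also have "\<dots> = \<sigma> / 2 * (\<gamma>^(Suc s) * F (j - s + 1) + \<gamma>^(Suc j) * F (N - j))"
      using pow_split2[OF j(1)] by simp
    also have "\<dots> \<le> \<sigma> / 2 * ?B"
      using np j(3) \<sigma>2 by (intro mult_left_mono) auto
    also have "\<dots> \<le> \<sigma> * ?B" using B0 \<sigma>2 by (simp add: mult_right_mono)
    finally show ?thesis using eqA by simp
  qed
qed

lemma lemmaB:
  assumes sN: "s < N" and Ls: "\<And>t. s < t \<Longrightarrow> t \<le> N \<Longrightarrow> L t = s"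
    and pubN: "\<gamma>^(N - s - 1) * \<beta> * ps N \<le> F (N - s + 1)"
  shows "(\<Sum>t\<in>{Suc s..<Suc N}. a t) \<le> \<sigma> * (\<Sum>t\<in>{Suc s..<Suc N}. b t)"
proof -
  have LN: "L N = s" by (rule Ls[OF sN order_refl])
  have aN: "a N = \<gamma>^N * (ps N * \<beta>)" using pubN LN sN by (simp add: thr_stage)
  have le: "\<gamma>^(Suc s) * (\<gamma>^(N - s - 1) * \<beta> * ps N) \<le> \<gamma>^(Suc s) * F (N - s + 1)"
    using pubN \<gamma>0 by (intro mult_left_mono) auto
  have e: "\<gamma>^(Suc s) * (\<gamma>^(N - s - 1) * \<beta> * ps N) = \<gamma>^N * (ps N * \<beta>)"
    using pow_split[OF sN] by (simp add: algebra_simps)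
  have aN_le: "a N \<le> \<gamma>^(Suc s) * F (N - s + 1)"
    using le by (simp only: aN e[symmetric])
  have A1: "(\<Sum>t\<in>{Suc s..<N}. a t) = \<gamma>^(Suc s) * F (N - s)" by (rule lemmaA(1)[OF sN Ls])
  have A2: "(\<Sum>t\<in>{Suc s..<N}. a t) \<le> \<sigma> * (\<Sum>t\<in>{Suc s..<N}. b t)" by (rule lemmaA(2)[OF sN Ls])
  have spa: "(\<Sum>t\<in>{Suc s..<Suc N}. a t) = (\<Sum>t\<in>{Suc s..<N}. a t) + a N"
    using sN by (simp add: sum.atLeastLessThan_Suc)
  have spb: "(\<Sum>t\<in>{Suc s..<Suc N}. b t) = (\<Sum>t\<in>{Suc s..<N}. b t) + b N"
    using sN by (simp add: sum.atLeastLessThan_Suc)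
  let ?B' = "\<Sum>t\<in>{Suc s..<Suc N}. b t"
  let ?B = "\<Sum>t\<in>{Suc s..<N}. b t"
  have B0: "?B' \<ge> 0" "?B \<ge> 0" by (rule sum_b_nonneg)+
  have mono: "F (N - s) \<le> F (N - s + 1)" using F_mono_Suc[where \<beta>=\<beta> and \<gamma>=\<gamma> and Cd=Cd and ps=ps, OF \<beta>0 \<gamma>0 Cd0 ps0] by simp
  have g0: "\<gamma>^(Suc s) \<ge> 0" using \<gamma>0 by simp
  have T2: "(\<Sum>t\<in>{Suc s..<Suc N}. a t) \<le> 2 * (\<gamma>^(Suc s) * F (N - s + 1))"
  proof -
    have "\<gamma>^(Suc s) * F (N - s) \<le> \<gamma>^(Suc s) * F (N - s + 1)"
      using mono g0 by (rule mult_left_mono)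
    then show ?thesis using spa A1 aN_le by simp
  qed
  have eqN: "Suc N - s = N - s + 1" using sN by simp
  from OPT_lemma[where \<beta>=\<beta> and \<gamma>=\<gamma> and Cd=Cd and ps=ps and pol=pol and s=s and M="Suc N", OF \<beta>0 \<gamma>0 Cd0 ps0 less_SucI[OF sN]]
  show ?thesis
  proof (elim disjE exE conjE)
    assume "\<gamma>^(Suc s) * F (Suc N - s) \<le> ?B'"
    then have "2 * (\<gamma>^(Suc s) * F (N - s + 1)) \<le> \<sigma> * ?B'"
      using eqN B0 \<sigma>2 mult_right_mono[of 2 \<sigma> ?B'] by simp
    then show ?thesis using T2 by simp
  next
    fix j assume j: "s < j" "j < Suc N" "pol j (ps j) (queue pol ps j) \<noteq> {}"
      and jB: "\<gamma>^j * (ps j * \<beta>) + \<gamma>^(Suc j) * F (Suc N - j) \<le> ?B'"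
    show ?thesis
    proof (cases "j = N")
      case True
      have "b N \<ge> \<gamma>^N * (ps N * \<beta>)"
        using stage_pub_lb[where \<beta>=\<beta> and \<gamma>=\<gamma> and Cd=Cd and ps=ps and pol=pol and t=N, OF \<beta>0 \<gamma>0 Cd0 ps0] j True \<gamma>0 by (intro mult_left_mono) auto
      then have "a N \<le> b N" by (subst aN) assumption
      moreover have "b N \<le> \<sigma> * b N" using b_nonneg[of N] \<sigma>2 mult_right_mono[of 1 \<sigma> "b N"] by simp
      ultimately have "(\<Sum>t\<in>{Suc s..<Suc N}. a t) \<le> \<sigma> * ?B + \<sigma> * b N" using spa A2 by simp
      then show ?thesis using spb by (simp add: distrib_left)
    next
      case False
      then have jN: "j < N" using j by simp
      have np: "\<gamma>^(Suc s) * F (j - s + 1) \<le> \<gamma>^j * (ps j * \<beta>)"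
      proof -
        have x1: "s < j" "j \<le> N" using j jN by auto
        have x2: "s < Suc j" "Suc j \<le> N" using j jN by auto
        show ?thesis by (rule nonpub(1)[OF x1(1) Ls[OF x1] Ls[OF x2]])
      qed
      have sa: "F ((j - s) + (Suc N - j)) \<le> \<sigma> / 2 * (F ((j - s) + 1) + \<gamma>^(j - s) * F (Suc N - j))"
        using j jN by (intro sub_inst) auto
      have eq: "(j - s) + (Suc N - j) = N - s + 1" using j jN by simp
      have "\<gamma>^(Suc s) * F (N - s + 1) \<le> \<gamma>^(Suc s) * (\<sigma> / 2 * (F ((j - s) + 1) + \<gamma>^(j - s) * F (Suc N - j)))"
        using sa eq g0 by (intro mult_left_mono) auto
      also have "\<dots> = \<sigma> / 2 * (\<gamma>^(Suc s) * F (j - s + 1) + \<gamma>^(Suc s) * \<gamma>^(j - s) * F (Suc N - j))"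
        by (simp add: algebra_simps)
      also have "\<dots> = \<sigma> / 2 * (\<gamma>^(Suc s) * F (j - s + 1) + \<gamma>^(Suc j) * F (Suc N - j))"
        using pow_split2[OF j(1)] by simp
      also have "\<dots> \<le> \<sigma> / 2 * ?B'"
        using np jB \<sigma>2 by (intro mult_left_mono) auto
      finally have "2 * (\<gamma>^(Suc s) * F (N - s + 1)) \<le> \<sigma> * ?B'" by simp
      then show ?thesis using T2 by simp
    qed
  qed
qed

lemma a0: "a 0 = 0"
  by (simp add: thr_stage Dsum_def)

lemma invariant:
  "(\<Sum>t<Suc (L (Suc n)). a t) \<le> \<sigma> * (\<Sum>t<Suc (L (Suc n)). b t)
    \<and> (\<forall>t. L (Suc n) < t \<and> t \<le> Suc n \<longrightarrow> L t = L (Suc n))"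
proof (induction n)
  case 0
  have L1: "L (Suc 0) = 0" by simp
  have "0 \<le> \<sigma> * b 0" using b_nonneg[of 0] \<sigma>2 by simp
  then have P1: "(\<Sum>t<Suc 0. a t) \<le> \<sigma> * (\<Sum>t<Suc 0. b t)" using a0 by simp
  have P2: "\<forall>t. 0 < t \<and> t \<le> Suc 0 \<longrightarrow> L t = 0"
  proof (intro allI impI)
    fix t :: nat assume "0 < t \<and> t \<le> Suc 0"
    then have "t = Suc 0" by auto
    then show "L t = 0" using L1 by simp
  qed
  show ?case unfolding L1 using P1 P2 by (rule conjI)
next
  case (Suc n)
  define N where "N = Suc n"
  define s where "s = L N"
  have IH: "(\<Sum>t<Suc s. a t) \<le> \<sigma> * (\<Sum>t<Suc s. b t) \<and> (\<forall>t. s < t \<and> t \<le> N \<longrightarrow> L t = s)"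
    using Suc.IH unfolding N_def[symmetric] s_def[symmetric] .
  have IH1: "(\<Sum>t<Suc s. a t) \<le> \<sigma> * (\<Sum>t<Suc s. b t)" using IH by (rule conjunct1)
  have IH2: "\<And>t. s < t \<Longrightarrow> t \<le> N \<Longrightarrow> L t = s" using conjunct2[OF IH] by blast
  have sN: "s < N" unfolding s_def N_def using lr_Suc_lt[of \<beta> \<gamma> Cd ps n] by simp
  show ?case
  proof (cases "\<gamma>^(N - s - 1) * \<beta> * ps N \<le> F (N - s + 1)")
    case True
    have LSN: "L (Suc N) = N" using True unfolding s_def by simp
    have B: "(\<Sum>t\<in>{Suc s..<Suc N}. a t) \<le> \<sigma> * (\<Sum>t\<in>{Suc s..<Suc N}. b t)"
      by (rule lemmaB[OF sN IH2 True])
    have "(\<Sum>t<Suc N. a t) = (\<Sum>t<Suc s. a t) + (\<Sum>t\<in>{Suc s..<Suc N}. a t)"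
      using sN by (intro split_sum) simp
    also have "\<dots> \<le> \<sigma> * (\<Sum>t<Suc s. b t) + \<sigma> * (\<Sum>t\<in>{Suc s..<Suc N}. b t)"
      using IH1 B by simp
    also have "\<dots> = \<sigma> * (\<Sum>t<Suc N. b t)"
      using split_sum[of "Suc s" "Suc N" b] sN by (simp add: distrib_left)
    finally have P1: "(\<Sum>t<Suc N. a t) \<le> \<sigma> * (\<Sum>t<Suc N. b t)" .
    have P2: "\<forall>t. N < t \<and> t \<le> Suc N \<longrightarrow> L t = N"
    proof (intro allI impI)
      fix t assume "N < t \<and> t \<le> Suc N"
      then have "t = Suc N" by simp
      then show "L t = N" using LSN by simp
    qed
    show ?thesis unfolding N_def[symmetric] LSN using P1 P2 by (rule conjI)
  next
    case False
    have LSN: "L (Suc N) = s" using False unfolding s_def by simp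
    have P2: "\<forall>t. s < t \<and> t \<le> Suc N \<longrightarrow> L t = s"
    proof (intro allI impI)
      fix t assume t: "s < t \<and> t \<le> Suc N"
      show "L t = s"
      proof (cases "t \<le> N")
        case True then show ?thesis using IH2 t by blast
      next
        case False then have "t = Suc N" using t by simp
        then show ?thesis using LSN by simp
      qed
    qed
    show ?thesis unfolding N_def[symmetric] LSN using IH1 P2 by (rule conjI)
  qed
qed

lemma pathwise_partial: "(\<Sum>t<N. a t) \<le> \<sigma> * (\<Sum>t<N. b t)"
proof (cases N)
  case 0 then show ?thesis by simp
next
  case (Suc n)
  define s where "s = L N"
  have I: "(\<Sum>t<Suc s. a t) \<le> \<sigma> * (\<Sum>t<Suc s. b t) \<and> (\<forall>t. s < t \<and> t \<le> N \<longrightarrow> L t = s)"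
    using invariant[of n] unfolding Suc[symmetric] s_def[symmetric] .
  have I1: "(\<Sum>t<Suc s. a t) \<le> \<sigma> * (\<Sum>t<Suc s. b t)" using I by (rule conjunct1)
  have I2: "\<And>t. s < t \<Longrightarrow> t \<le> N \<Longrightarrow> L t = s" using conjunct2[OF I] by blast
  have sN: "s < N" unfolding s_def using Suc lr_Suc_lt[of \<beta> \<gamma> Cd ps n] by simp
  have A: "(\<Sum>t\<in>{Suc s..<N}. a t) \<le> \<sigma> * (\<Sum>t\<in>{Suc s..<N}. b t)"
    by (rule lemmaA(2)[OF sN I2])
  have "(\<Sum>t<N. a t) = (\<Sum>t<Suc s. a t) + (\<Sum>t\<in>{Suc s..<N}. a t)"
    using sN by (intro split_sum) simp
  also have "\<dots> \<le> \<sigma> * (\<Sum>t<Suc s. b t) + \<sigma> * (\<Sum>t\<in>{Suc s..<N}. b t)"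
    using I1 A by simp
  also have "\<dots> = \<sigma> * (\<Sum>t<N. b t)"
    using split_sum[of "Suc s" N b] sN by (simp add: distrib_left)
  finally show ?thesis .
qed

end


lemma small_sigma_zero:
  assumes \<beta>0: "\<beta> \<ge> 0" and \<gamma>0: "0 < \<gamma>" and Cd0: "\<And>i. Cd i \<ge> 0" and ps0: "\<And>t. ps t \<ge> 0"
    and sub: "sub_additive (\<sigma> / 2) \<gamma> (agg_delay \<gamma> Cd)" and \<sigma>: "\<sigma> < 2"
  shows "stage_cost \<beta> Cd (threshold_policy \<beta> \<gamma> Cd) ps t = 0"
proof -
  let ?F = "agg_delay \<gamma> Cd"
  have Fnn: "\<And>n. ?F n \<ge> 0" using F_nonneg[where \<beta>=\<beta> and \<gamma>=\<gamma> and Cd=Cd and ps=ps, OF \<beta>0 \<gamma>0 Cd0 ps0] by blast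
  have si: "\<And>n1 n2. 1 \<le> n1 \<Longrightarrow> 1 \<le> n2 \<Longrightarrow> ?F (n1 + n2) \<le> \<sigma> / 2 * (?F (n1 + 1) + \<gamma>^n1 * ?F n2)"
    using sub unfolding sub_additive_def by blast
  have "?F 2 \<le> \<sigma> / 2 * (?F 2 + \<gamma> * ?F 1)" using si[of 1 1] by (simp add: numeral_2_eq_2)
  then have "?F 2 \<le> \<sigma> / 2 * ?F 2" by (simp add: numeral_2_eq_2)
  then have h: "(1 - \<sigma> / 2) * ?F 2 \<le> 0" by (simp add: algebra_simps)
  have "1 - \<sigma> / 2 > 0" using \<sigma> by simp
  then have "?F 2 \<le> 0" using h by (simp add: mult_le_0_iff)
  then have F2: "?F 2 = 0" using Fnn[of 2] by simp
  have Fz: "?F n = 0" for n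
  proof (induction n)
    case 0 then show ?case by simp
  next
    case (Suc n)
    show ?case
    proof (cases "n = 0")
      case True then show ?thesis by simp
    next
      case False
      then have "?F (1 + n) \<le> \<sigma> / 2 * (?F (1 + 1) + \<gamma>^1 * ?F n)" using si[of 1 n] by simp
      then have "?F (Suc n) \<le> 0" using F2 Suc.IH by (simp add: numeral_2_eq_2)
      then show ?thesis using Fnn[of "Suc n"] by simp
    qed
  qed
  have Dz: "Dsum Cd n = 0" for n
  proof (cases "n = 0")
    case True then show ?thesis by (simp add: Dsum_def)
  next
    case False
    then have "?F (Suc n) = ?F n + \<gamma>^(n-1) * Dsum Cd n" by (intro F_Suc) simp
    then have "\<gamma>^(n-1) * Dsum Cd n = 0" using Fz by simp
    then show ?thesis using \<gamma>0 by simp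
  qed
  show ?thesis
  proof (cases "\<gamma> ^ (t - lr \<beta> \<gamma> Cd ps t - 1) * \<beta> * ps t \<le> ?F (t - lr \<beta> \<gamma> Cd ps t + 1)")
    case True
    then have "\<gamma> ^ (t - lr \<beta> \<gamma> Cd ps t - 1) * (\<beta> * ps t) \<le> 0" using Fz by (simp add: mult.assoc)
    then have "\<gamma> ^ (t - lr \<beta> \<gamma> Cd ps t - 1) * (\<beta> * ps t) \<le> \<gamma> ^ (t - lr \<beta> \<gamma> Cd ps t - 1) * 0" by simp
    moreover have "\<gamma> ^ (t - lr \<beta> \<gamma> Cd ps t - 1) > 0" using \<gamma>0 by simp
    ultimately have "\<beta> * ps t \<le> 0" by (rule mult_left_le_imp_le)
    moreover have "0 \<le> \<beta> * ps t" using \<beta>0 ps0[of t] by simp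
    ultimately have "\<beta> * ps t = 0" by linarith
    then show ?thesis using True by (auto simp: thr_stage)
  next
    case False
    then show ?thesis using Dz by (simp add: thr_stage)
  qed
qed

lemma pathwise:
  assumes \<beta>0: "\<beta> \<ge> 0" and \<gamma>0: "0 < \<gamma>" and Cd0: "\<And>i. Cd i \<ge> 0" and ps0: "\<And>t. ps t \<ge> 0"
    and sub: "sub_additive (\<sigma> / 2) \<gamma> (agg_delay \<gamma> Cd)"
  shows "(\<Sum>t. ennreal (\<gamma>^t * stage_cost \<beta> Cd (threshold_policy \<beta> \<gamma> Cd) ps t))
     \<le> ennreal \<sigma> * (\<Sum>t. ennreal (\<gamma>^t * stage_cost \<beta> Cd pol ps t))"
proof (cases "\<sigma> < 2")
  case True
  then show ?thesis using small_sigma_zero[where \<beta>=\<beta> and \<gamma>=\<gamma> and Cd=Cd and ps=ps and \<sigma>=\<sigma>, OF \<beta>0 \<gamma>0 Cd0 ps0 sub True] by simp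
next
  case False
  then have \<sigma>2: "\<sigma> \<ge> 2" by simp
  let ?a = "\<lambda>t. \<gamma>^t * stage_cost \<beta> Cd (threshold_policy \<beta> \<gamma> Cd) ps t"
  let ?b = "\<lambda>t. \<gamma>^t * stage_cost \<beta> Cd pol ps t"
  have ann: "\<And>t. ?a t \<ge> 0" and bnn: "\<And>t. ?b t \<ge> 0"
    using stage_nonneg[where \<beta>=\<beta> and \<gamma>=\<gamma> and Cd=Cd and ps=ps, OF \<beta>0 \<gamma>0 Cd0 ps0] \<gamma>0 by simp_all
  show ?thesis
    unfolding suminf_eq_SUP[of "\<lambda>t. ennreal (?a t)"]
  proof (rule SUP_least)
    fix N
    have "(\<Sum>t<N. ennreal (?a t)) = ennreal (\<Sum>t<N. ?a t)" using ann by simp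
    also have "\<dots> \<le> ennreal (\<sigma> * (\<Sum>t<N. ?b t))"
      using pathwise_partial[where \<beta>=\<beta> and \<gamma>=\<gamma> and Cd=Cd and ps=ps and \<sigma>=\<sigma> and pol=pol and N=N, OF \<beta>0 \<gamma>0 Cd0 ps0 sub \<sigma>2] by (intro ennreal_leI) simp
    also have "\<dots> = ennreal \<sigma> * ennreal (\<Sum>t<N. ?b t)"
      using \<sigma>2 bnn by (intro ennreal_mult) (auto intro: sum_nonneg)
    also have "ennreal (\<Sum>t<N. ?b t) = (\<Sum>t<N. ennreal (?b t))" using bnn by simp
    also have "(\<Sum>t<N. ennreal (?b t)) \<le> (\<Sum>t. ennreal (?b t))"
      by (rule sum_le_suminf) auto
    finally show "(\<Sum>t<N. ennreal (?a t)) \<le> ennreal \<sigma> * (\<Sum>t. ennreal (?b t))"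
      by (simp add: mult_left_mono)
  qed
qed

lemma nn_integral_cmult_le:
  fixes c :: real
  assumes "0 < c"
  shows "(\<integral>\<^sup>+x. ennreal c * f x \<partial>M) \<le> ennreal c * integral\<^sup>N M f"
  unfolding nn_integral_def
proof (rule SUP_least)
  fix g assume g: "g \<in> {g. simple_function M g \<and> g \<le> (\<lambda>x. ennreal c * f x)}"
  let ?h = "\<lambda>x. ennreal (1/c) * g x"
  have sg: "simple_function M g" using g by simp
  have sh: "simple_function M ?h" using sg by (intro simple_function_mult) auto
  have cc: "ennreal c * ennreal (1/c) = 1"
    using assms by (simp flip: ennreal_mult)
  have hle: "?h \<le> f"
  proof (rule le_funI)
    fix x
    have "g x \<le> ennreal c * f x" using g by (auto simp: le_fun_def)
    then have "?h x \<le> ennreal (1/c) * (ennreal c * f x)" by (rule mult_left_mono) simp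
    also have "\<dots> = f x" using cc by (simp add: mult.assoc[symmetric] mult.commute)
    finally show "?h x \<le> f x" .
  qed
  have geq: "(\<lambda>x. ennreal c * ?h x) = g"
    using cc by (simp add: mult.assoc[symmetric])
  have "integral\<^sup>S M g = ennreal c * integral\<^sup>S M ?h"
    using simple_integral_mult[OF sh, of c] unfolding geq .
  also have "\<dots> \<le> ennreal c * (SUP g\<in>{g. simple_function M g \<and> g \<le> f}. integral\<^sup>S M g)"
    using sh hle by (intro mult_left_mono SUP_upper) auto
  finally show "integral\<^sup>S M g \<le> ennreal c * (SUP g\<in>{g. simple_function M g \<and> g \<le> f}. integral\<^sup>S M g)" .
qed



theorem theorem2:
  fixes M :: "'w measure" and P0 :: real and R :: "nat \<Rightarrow> 'w \<Rightarrow> real \<Rightarrow> real"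
    and \<beta> \<gamma> \<sigma> :: real and Cd :: "nat \<Rightarrow> real" and pstar :: policy
  assumes "prob_space M"
    and "prob_space.indep_vars M (\<lambda>_. Pi\<^sub>M UNIV (\<lambda>_::real. borel)) R UNIV"
    and "\<And>t. distr M (Pi\<^sub>M UNIV (\<lambda>_::real. borel)) (R t) = distr M (Pi\<^sub>M UNIV (\<lambda>_::real. borel)) (R 0)"
    and "\<And>w t. w \<in> space M \<Longrightarrow> price P0 R w t \<ge> 0"
    and "\<beta> \<ge> 0" and "0 < \<gamma>" and "\<gamma> < 1"
    and "\<And>i. Cd i \<ge> 0"
    and "sub_additive (\<sigma> / 2) \<gamma> (agg_delay \<gamma> Cd)"
    and "optimal_policy M P0 R \<beta> \<gamma> Cd pstar"
  shows "total_cost M P0 R \<beta> \<gamma> Cd (threshold_policy \<beta> \<gamma> Cd)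
           \<le> ennreal \<sigma> * total_cost M P0 R \<beta> \<gamma> Cd pstar"
proof -
  let ?f = "\<lambda>w. \<Sum>t. ennreal (\<gamma> ^ t * stage_cost \<beta> Cd (threshold_policy \<beta> \<gamma> Cd) (price P0 R w) t)"
  let ?g = "\<lambda>w. \<Sum>t. ennreal (\<gamma> ^ t * stage_cost \<beta> Cd pstar (price P0 R w) t)"
  have pw: "?f w \<le> ennreal \<sigma> * ?g w" if w: "w \<in> space M" for w
  proof -
    have ps0: "\<And>t. price P0 R w t \<ge> 0" using assms(4) w by blast
    show ?thesis
      by (rule pathwise[where \<beta>=\<beta> and \<gamma>=\<gamma> and Cd=Cd and ps="price P0 R w" and \<sigma>=\<sigma> and pol=pstar,
            OF assms(5) assms(6) assms(8) ps0 assms(9)])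
  qed
  have "integral\<^sup>N M ?f \<le> (\<integral>\<^sup>+w. ennreal \<sigma> * ?g w \<partial>M)"
    using pw by (rule nn_integral_mono)
  also have "\<dots> \<le> ennreal \<sigma> * integral\<^sup>N M ?g"
  proof (cases "\<sigma> > 0")
    case True
    then show ?thesis by (rule nn_integral_cmult_le)
  next
    case False
    then have "ennreal \<sigma> = 0" by (simp add: ennreal_eq_0_iff)
    then show ?thesis by simp
  qed
  finally show ?thesis unfolding total_cost_def .
qed


end
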